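(* Assume the standing hypotheses in the context. Consider, in a front tracking solution, a family of parallel contact discontinuities $\sigma_\alpha$, $\alpha=1,\dots,N$, of a linearly degenerate family $i$, and a single front $\sigma$ of a family $k\neq i$ which interacts with all of them. Let $\xi_\alpha$, $\xi$ be their shift rates before the interactions and $\xi_\alpha'$, $\xi'$ after, and assume $\xi_\alpha=\bar\xi$ for all $\alpha$. Let $\bar\Lambda$, $\Lambda$ be the speeds of the $\sigma_\alpha$ and of $\sigma$ before interaction and $\bar\Lambda'$, $\Lambda'$ their speeds after interaction. Then after the interactions all $\xi_\alpha'$ have the same value $\bar\xi'$ and $$\xi_\alpha'=\bar\xi'=\frac{\bar\xi(\bar\Lambda'-\Lambda)-\xi(\bar\Lambda'-\bar\Lambda)}{\Lambda-\bar\Lambda},\qquad \xi'=\frac{\bar\xi(\Lambda'-\Lambda)-\xi(\bar\Lambda'-\bar\Lambda)}{\Lambda-\bar\Lambda}.$$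
   Context: Setting: $u_t+f(u)_x=0$ with $f:\Omega\to\mathbb{R}^n$ smooth, $\Omega\subseteq\mathbb{R}^n$ open, eigenvalues $\lambda_1<\dots<\lambda_n$ of $Df$ with right eigenvectors $r_i$. Standing assumptions: (H1) each field genuinely nonlinear ($r_i\bullet\lambda_i\neq0$) or linearly degenerate ($r_i\bullet\lambda_i\equiv0$); (H2) rarefaction curves form Riemann coordinates $w=(w_1,\dots,w_n)$; (H3) shock and rarefaction curves coincide; $E=\{u\in\Omega:w_i(u)\in[a_i,b_i]\}$ compact and uniformly strictly hyperbolic. Front tracking solution with parameter $\nu$: piecewise constant solution with values in $E^\nu=\{u\in E:w_i(u)\in2^{-\nu}\mathbb{Z}\}$ obtained by solving Riemann problems $[u^-,u^+]$ (split along $\omega_i=(w_1(u^+),\dots,w_i(u^+),w_{i+1}(u^-),\dots,w_n(u^-))$) with contact discontinuities of speed $\lambda_i$ for linearly degenerate fields, shocks with Rankine–Hugoniot speed, and rarefaction fronts with $w_i$-jump $2^{-\nu}$, and tracking interactions. Shift rates: if the initial jumps at $y_\alpha$ are moved to $y_\alpha+\theta\xi_\alpha$, each front at $x_\beta(t)$ of the original solution moves to $x_\beta(t)+\theta\xi_\beta(t)+o(\theta)$ in the perturbed front tracking solution; $\xi_\beta$ is the shift rate of that front. *)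

theory Defs
  imports "HOL-Analysis.Analysis"
begin

text \<open>Shift rate: in the perturbed front tracking solution (perturbation parameter
  theta) a front sits at position x theta = x 0 + theta * xi + o(theta), i.e. xi is the
  derivative at theta = 0 of its position.\<close>
definition shift_rate :: "(real \<Rightarrow> real) \<Rightarrow> real \<Rightarrow> bool" where
  "shift_rate x xi \<longleftrightarrow> (x has_real_derivative xi) (at 0)"

end

theory Submission
  imports Defs
begin

lemma alg: fixes l0 Lb xi xib c :: real assumes "l0 - Lb \<noteq> 0"
  shows "(xi + l0*((xib-xi)/(l0-Lb))) - c*((xib-xi)/(l0-Lb)) = (xib*(c-l0) - xi*(c-Lb))/(Lb-l0)"
proof -
  define u where "u = (xib-xi)/(l0-Lb)"
  have hu: "u*(l0-Lb) = xib - xi" unfolding u_def using assms by simp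
  have d: "Lb - l0 \<noteq> 0" using assms by simp
  have "((xi + l0*u) - c*u) * (Lb - l0) = xi*(Lb-l0) - (l0 - c)*(u*(l0-Lb))" by (simp add: algebra_simps)
  also have "\<dots> = xib*(c-l0) - xi*(c-Lb)" unfolding hu by (simp add: algebra_simps)
  finally have "((xi + l0*u) - c*u) * (Lb - l0) = xib*(c-l0) - xi*(c-Lb)" .
  then show ?thesis unfolding u_def[symmetric] using d by (simp add: eq_divide_eq)
qed
lemma alg2: fixes l0 Lb xi xib l :: real assumes "l - Lb \<noteq> 0" "xib - X + Lb * t = 0"
  shows "(xib - X + l * t) / (l - Lb) = t"
proof -
  have "xib - X + l * t = (l - Lb) * t" using assms(2) by (simp add: algebra_simps)
  then show ?thesis using assms(1) by simp
qed

theorem lemma3p3: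
  fixes N :: nat
    and xc :: "nat \<Rightarrow> real \<Rightarrow> real \<Rightarrow> real"
    and xs :: "real \<Rightarrow> real \<Rightarrow> real"
    and tau :: "nat \<Rightarrow> real \<Rightarrow> real"
    and lam :: "nat \<Rightarrow> real"
    and Lb Lb' xib xi \<delta> T :: real
  assumes N: "N \<ge> 1"
    and delta: "\<delta> > 0"
    and noncoinc: "\<And>a. a < N \<Longrightarrow> lam a \<noteq> Lb"
    and order0: "\<And>\<theta>. \<bar>\<theta>\<bar> < \<delta> \<Longrightarrow> 0 < tau 0 \<theta>"
    and order: "\<And>\<theta> a. \<bar>\<theta>\<bar> < \<delta> \<Longrightarrow> Suc a < N \<Longrightarrow> tau a \<theta> < tau (Suc a) \<theta>"
    and contact_before: "\<And>\<theta> a t. \<bar>\<theta>\<bar> < \<delta> \<Longrightarrow> a < N \<Longrightarrow> 0 \<le> t \<Longrightarrow> t \<le> tau a \<theta> \<Longrightarrow>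
        xc a \<theta> t = xc a \<theta> 0 + Lb * t"
    and contact_after: "\<And>\<theta> a t. \<bar>\<theta>\<bar> < \<delta> \<Longrightarrow> a < N \<Longrightarrow> tau a \<theta> \<le> t \<Longrightarrow>
        xc a \<theta> t = xc a \<theta> (tau a \<theta>) + Lb' * (t - tau a \<theta>)"
    and front_first: "\<And>\<theta> t. \<bar>\<theta>\<bar> < \<delta> \<Longrightarrow> 0 \<le> t \<Longrightarrow> t \<le> tau 0 \<theta> \<Longrightarrow>
        xs \<theta> t = xs \<theta> 0 + lam 0 * t"
    and front_mid: "\<And>\<theta> a t. \<bar>\<theta>\<bar> < \<delta> \<Longrightarrow> Suc a < N \<Longrightarrow> tau a \<theta> \<le> t \<Longrightarrow> t \<le> tau (Suc a) \<theta> \<Longrightarrow>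
        xs \<theta> t = xs \<theta> (tau a \<theta>) + lam (Suc a) * (t - tau a \<theta>)"
    and front_last: "\<And>\<theta> t. \<bar>\<theta>\<bar> < \<delta> \<Longrightarrow> tau (N - 1) \<theta> \<le> t \<Longrightarrow>
        xs \<theta> t = xs \<theta> (tau (N - 1) \<theta>) + lam N * (t - tau (N - 1) \<theta>)"
    and meet: "\<And>\<theta> a. \<bar>\<theta>\<bar> < \<delta> \<Longrightarrow> a < N \<Longrightarrow> xs \<theta> (tau a \<theta>) = xc a \<theta> (tau a \<theta>)"
    and rate_contacts: "\<And>a. a < N \<Longrightarrow> shift_rate (\<lambda>\<theta>. xc a \<theta> 0) xib"
    and rate_front: "shift_rate (\<lambda>\<theta>. xs \<theta> 0) xi"
    and T: "T > tau (N - 1) 0"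
  shows "(\<forall>a<N. shift_rate (\<lambda>\<theta>. xc a \<theta> T)
            ((xib * (Lb' - lam 0) - xi * (Lb' - Lb)) / (Lb - lam 0)))
       \<and> shift_rate (\<lambda>\<theta>. xs \<theta> T)
            ((xib * (lam N - lam 0) - xi * (lam N - Lb)) / (Lb - lam 0))"
proof -
  define t' where "t' = (xib - xi) / (lam 0 - Lb)"
  define X' where "X' = xi + lam 0 * t'"
  have l0: "lam 0 - Lb \<noteq> 0" using noncoinc N by force
  have key: "xib - X' + Lb * t' = 0"
  proof -
    have "t' * (lam 0 - Lb) = xib - xi" unfolding t'_def using l0 by simp
    then show ?thesis unfolding X'_def by (simp add: algebra_simps)
  qed
  have evd: "\<forall>\<^sub>F \<theta> in nhds (0::real). \<bar>\<theta>\<bar> < \<delta>"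
    using delta by (auto simp: eventually_nhds_metric dist_real_def intro!: exI[of _ \<delta>])
  have rc: "\<And>a. a < N \<Longrightarrow> DERIV (\<lambda>\<theta>. xc a \<theta> 0) 0 :> xib" using rate_contacts by (simp add: shift_rate_def)
  have rf: "DERIV (\<lambda>\<theta>. xs \<theta> 0) 0 :> xi" using rate_front by (simp add: shift_rate_def)
  have pos: "\<And>\<theta>. \<bar>\<theta>\<bar> < \<delta> \<Longrightarrow> a < N \<Longrightarrow> 0 < tau a \<theta>" for a
  proof (induction a)
    case 0 then show ?case using order0 by auto
  next
    case (Suc a) then show ?case using order[of \<theta> a] by force
  qed
  have mono: "\<And>\<theta>. \<bar>\<theta>\<bar> < \<delta> \<Longrightarrow> a < N \<Longrightarrow> tau a \<theta> \<le> tau (N - 1) \<theta>" for a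
  proof -
    fix \<theta> assume th: "\<bar>\<theta>\<bar> < \<delta>" and a: "a < N"
    have "\<forall>b. a + b < N \<longrightarrow> tau a \<theta> \<le> tau (a + b) \<theta>"
    proof (intro allI)
      fix b show "a + b < N \<longrightarrow> tau a \<theta> \<le> tau (a + b) \<theta>"
      proof (induction b)
        case 0 then show ?case by simp
      next
        case (Suc b) then show ?case using order[OF th, of "a + b"] by force
      qed
    qed
    moreover obtain b where b: "N - 1 = a + b" using a by (metis le_add_diff_inverse less_Suc_eq_le Suc_diff_1 gr_implies_not0 not_gr0)
    ultimately have "tau a \<theta> \<le> tau (a + b) \<theta>" using N by auto
    then show "tau a \<theta> \<le> tau (N - 1) \<theta>" using b by simp
  qed
  have main: "a < N \<Longrightarrow> DERIV (tau a) 0 :> t' \<and> DERIV (\<lambda>\<theta>. xs \<theta> (tau a \<theta>)) 0 :> X'" for a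
  proof (induction a)
    case 0
    have e1: "\<forall>\<^sub>F \<theta> in nhds 0. tau 0 \<theta> = (xc 0 \<theta> 0 - xs \<theta> 0) / (lam 0 - Lb)"
      using evd
    proof eventually_elim
      case (elim \<theta>)
      have p: "0 < tau 0 \<theta>" using order0 elim by auto
      have "xs \<theta> 0 + lam 0 * tau 0 \<theta> = xc 0 \<theta> 0 + Lb * tau 0 \<theta>"
        using front_first[OF elim _ order_refl] contact_before[OF elim _ _ order_refl, of 0] meet[OF elim, of 0] p N by auto
      then have "tau 0 \<theta> * (lam 0 - Lb) = xc 0 \<theta> 0 - xs \<theta> 0" by (simp add: algebra_simps)
      then show ?case using l0 by (simp add: eq_divide_eq)
    qed
    have d1: "DERIV (tau 0) 0 :> t'"
    proof -
      have "DERIV (\<lambda>\<theta>. (xc 0 \<theta> 0 - xs \<theta> 0) / (lam 0 - Lb)) 0 :> (xib - xi) / (lam 0 - Lb)"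
        using rc[of 0] rf N l0 by (auto intro!: derivative_eq_intros)
      then show ?thesis unfolding t'_def using DERIV_cong_ev[OF refl e1 refl] by simp
    qed
    have e2: "\<forall>\<^sub>F \<theta> in nhds 0. xs \<theta> (tau 0 \<theta>) = xs \<theta> 0 + lam 0 * tau 0 \<theta>"
      using evd
    proof eventually_elim
      case (elim \<theta>)
      have p: "0 < tau 0 \<theta>" using order0 elim by auto
      then show ?case using front_first[OF elim _ order_refl] by auto
    qed
    have "DERIV (\<lambda>\<theta>. xs \<theta> 0 + lam 0 * tau 0 \<theta>) 0 :> X'"
      unfolding X'_def using rf d1 by (auto intro!: derivative_eq_intros)
    then show ?case using d1 DERIV_cong_ev[OF refl e2 refl] by simp
  next
    case (Suc a)
    then have IH: "DERIV (tau a) 0 :> t'" "DERIV (\<lambda>\<theta>. xs \<theta> (tau a \<theta>)) 0 :> X'" by auto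
    have la: "lam (Suc a) - Lb \<noteq> 0" using noncoinc Suc.prems by force
    have e1: "\<forall>\<^sub>F \<theta> in nhds 0. tau (Suc a) \<theta> = (xc (Suc a) \<theta> 0 - xs \<theta> (tau a \<theta>) + lam (Suc a) * tau a \<theta>) / (lam (Suc a) - Lb)"
      using evd
    proof eventually_elim
      case (elim \<theta>)
      have p: "0 < tau (Suc a) \<theta>" using pos elim Suc.prems by auto
      have o: "tau a \<theta> < tau (Suc a) \<theta>" using order elim Suc.prems by auto
      have "xs \<theta> (tau a \<theta>) + lam (Suc a) * (tau (Suc a) \<theta> - tau a \<theta>) = xc (Suc a) \<theta> 0 + Lb * tau (Suc a) \<theta>"
        using front_mid[OF elim Suc.prems _ order_refl] contact_before[OF elim Suc.prems _ order_refl] meet[OF elim Suc.prems] p o by auto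
      then have "tau (Suc a) \<theta> * (lam (Suc a) - Lb) = xc (Suc a) \<theta> 0 - xs \<theta> (tau a \<theta>) + lam (Suc a) * tau a \<theta>" by (simp add: algebra_simps)
      then show ?case using la by (simp add: eq_divide_eq)
    qed
    have d1: "DERIV (tau (Suc a)) 0 :> t'"
    proof -
      have "DERIV (\<lambda>\<theta>. (xc (Suc a) \<theta> 0 - xs \<theta> (tau a \<theta>) + lam (Suc a) * tau a \<theta>) / (lam (Suc a) - Lb)) 0 :> (xib - X' + lam (Suc a) * t') / (lam (Suc a) - Lb)"
        using rc[OF Suc.prems] IH la by (auto intro!: derivative_eq_intros)
      moreover have "(xib - X' + lam (Suc a) * t') / (lam (Suc a) - Lb) = t'"
        using alg2[OF la key] .
      ultimately show ?thesis using DERIV_cong_ev[OF refl e1 refl] by simp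
    qed
    have e2: "\<forall>\<^sub>F \<theta> in nhds 0. xs \<theta> (tau (Suc a) \<theta>) = xc (Suc a) \<theta> 0 + Lb * tau (Suc a) \<theta>"
      using evd
    proof eventually_elim
      case (elim \<theta>)
      have p: "0 < tau (Suc a) \<theta>" using pos elim Suc.prems by auto
      then show ?case using contact_before[OF elim Suc.prems _ order_refl] meet[OF elim Suc.prems] by auto
    qed
    have "DERIV (\<lambda>\<theta>. xc (Suc a) \<theta> 0 + Lb * tau (Suc a) \<theta>) 0 :> xib + Lb * t'"
      using rc[OF Suc.prems] d1 by (auto intro!: derivative_eq_intros)
    moreover have "xib + Lb * t' = X'" using key by simp
    ultimately show ?case using d1 DERIV_cong_ev[OF refl e2 refl] by simp
  qed
  have N1: "N - 1 < N" using N by simp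
  have cont: "isCont (tau (N - 1)) 0" using main[OF N1] DERIV_isCont by blast
  have evT: "\<forall>\<^sub>F \<theta> in nhds 0. tau (N - 1) \<theta> < T"
    using cont T by (simp add: isCont_def order_tendstoD(2) tendsto_at_iff_tendsto_nhds)
  have part1: "shift_rate (\<lambda>\<theta>. xc a \<theta> T) ((xib * (Lb' - lam 0) - xi * (Lb' - Lb)) / (Lb - lam 0))" if a: "a < N" for a
  proof -
    have e: "\<forall>\<^sub>F \<theta> in nhds 0. xc a \<theta> T = xs \<theta> (tau a \<theta>) + Lb' * (T - tau a \<theta>)"
      using evd evT
    proof eventually_elim
      case (elim \<theta>)
      then have "tau a \<theta> \<le> T" using mono[OF elim(1) a] by simp
      then show ?case using contact_after[OF elim(1) a, of T] meet[OF elim(1) a] by simp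
    qed
    have "DERIV (\<lambda>\<theta>. xs \<theta> (tau a \<theta>) + Lb' * (T - tau a \<theta>)) 0 :> X' - Lb' * t'"
      using main[OF a] by (auto intro!: derivative_eq_intros)
    moreover have "X' - Lb' * t' = (xib * (Lb' - lam 0) - xi * (Lb' - Lb)) / (Lb - lam 0)"
      unfolding X'_def t'_def using alg[OF l0] .
    ultimately show ?thesis unfolding shift_rate_def using DERIV_cong_ev[OF refl e refl] by simp
  qed
  have part2: "shift_rate (\<lambda>\<theta>. xs \<theta> T) ((xib * (lam N - lam 0) - xi * (lam N - Lb)) / (Lb - lam 0))"
  proof -
    have e: "\<forall>\<^sub>F \<theta> in nhds 0. xs \<theta> T = xs \<theta> (tau (N - 1) \<theta>) + lam N * (T - tau (N - 1) \<theta>)"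
      using evd evT
    proof eventually_elim
      case (elim \<theta>)
      then show ?case using front_last[OF elim(1), of T] by simp
    qed
    have "DERIV (\<lambda>\<theta>. xs \<theta> (tau (N - 1) \<theta>) + lam N * (T - tau (N - 1) \<theta>)) 0 :> X' - lam N * t'"
      using main[OF N1] by (auto intro!: derivative_eq_intros)
    moreover have "X' - lam N * t' = (xib * (lam N - lam 0) - xi * (lam N - Lb)) / (Lb - lam 0)"
      unfolding X'_def t'_def using alg[OF l0] .
    ultimately show ?thesis unfolding shift_rate_def using DERIV_cong_ev[OF refl e refl] by simp
  qed
  show ?thesis using part1 part2 by blast
qed

end
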